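(* Let $G$ be a group with finite generating set $S$, and let $F\subset G$ be a finite nonempty set which is optimal for the outer boundary. Then there is a set $F^*$ with $|F^*|=|F|$ which is optimal for the outer boundary and such that $F^*\cup\partial_{out}F^*$ is optimal for the inner boundary. Furthermore, every set of cardinality $|F^*\cup\partial_{out}F^*|$ which is optimal for the inner boundary is of the form $F''\cup\partial_{out}F''$ for some set $F''$ with $|F''|=|F|$ which is optimal for the outer boundary.
   Context: For finite $F\subset G$: $\partial_{in}F=\{g\in F:\exists s\in S\cup S^{-1}, gs\notin F\}$ and $\partial_{out}F=\{gs:g\in F,s\in S\cup S^{-1}\}\setminus F$. A finite nonempty set $F$ is optimal for the inner (resp. outer) boundary if for every finite nonempty $F'$ with $|F'|\leq|F|$ one has $\frac{|\partial F'|}{|F'|}\geq\frac{|\partial F|}{|F|}$, with strict inequality whenever $|F'|<|F|$, where $\partial=\partial_{in}$ (resp. $\partial_{out}$). *)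

theory Defs
  imports "HOL-Algebra.Algebra"
begin

definition sym_gens :: "('a, 'b) monoid_scheme \<Rightarrow> 'a set \<Rightarrow> 'a set" where
  "sym_gens G S = S \<union> (\<lambda>s. inv\<^bsub>G\<^esub> s) ` S"

definition inner_boundary :: "('a, 'b) monoid_scheme \<Rightarrow> 'a set \<Rightarrow> 'a set \<Rightarrow> 'a set" where
  "inner_boundary G S F = {g \<in> F. \<exists>s \<in> sym_gens G S. g \<otimes>\<^bsub>G\<^esub> s \<notin> F}"

definition outer_boundary :: "('a, 'b) monoid_scheme \<Rightarrow> 'a set \<Rightarrow> 'a set \<Rightarrow> 'a set" where
  "outer_boundary G S F = {g \<otimes>\<^bsub>G\<^esub> s | g s. g \<in> F \<and> s \<in> sym_gens G S} - F"

definition optimal_for ::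
  "('a, 'b) monoid_scheme \<Rightarrow> ('a set \<Rightarrow> 'a set) \<Rightarrow> 'a set \<Rightarrow> bool" where
  "optimal_for G bd F \<longleftrightarrow>
     F \<subseteq> carrier G \<and> finite F \<and> F \<noteq> {} \<and>
     (\<forall>F'. F' \<subseteq> carrier G \<and> finite F' \<and> F' \<noteq> {} \<and> card F' \<le> card F \<longrightarrow>
        real (card (bd F')) / real (card F') \<ge> real (card (bd F)) / real (card F) \<and>
        (card F' < card F \<longrightarrow>
           real (card (bd F')) / real (card F') > real (card (bd F)) / real (card F)))"

definition optimal_inner :: "('a, 'b) monoid_scheme \<Rightarrow> 'a set \<Rightarrow> 'a set \<Rightarrow> bool" where
  "optimal_inner G S F = optimal_for G (inner_boundary G S) F"

definition optimal_outer :: "('a, 'b) monoid_scheme \<Rightarrow> 'a set \<Rightarrow> 'a set \<Rightarrow> bool" where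
  "optimal_outer G S F = optimal_for G (outer_boundary G S) F"

end

theory Submission
  imports Defs
begin

definition nbh :: "('a, 'b) monoid_scheme \<Rightarrow> 'a set \<Rightarrow> 'a set \<Rightarrow> 'a set" where
  "nbh G S A = A \<union> outer_boundary G S A"

definition intr :: "('a, 'b) monoid_scheme \<Rightarrow> 'a set \<Rightarrow> 'a set \<Rightarrow> 'a set" where
  "intr G S E = E - inner_boundary G S E"

definition rin :: "('a, 'b) monoid_scheme \<Rightarrow> 'a set \<Rightarrow> 'a set \<Rightarrow> real" where
  "rin G S E = real (card (inner_boundary G S E)) / real (card E)"

lemma nbh_eq: "nbh G S A = A \<union> (\<lambda>(g,s). g \<otimes>\<^bsub>G\<^esub> s) ` (A \<times> sym_gens G S)"
  by (auto simp: nbh_def outer_boundary_def)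

lemma sym_gens_carrier: "group G \<Longrightarrow> S \<subseteq> carrier G \<Longrightarrow> sym_gens G S \<subseteq> carrier G"
  by (auto simp: sym_gens_def)

lemma finite_sym: "finite S \<Longrightarrow> finite (sym_gens G S)"
  by (simp add: sym_gens_def)

lemma nbh_finite: "finite A \<Longrightarrow> finite S \<Longrightarrow> finite (nbh G S A)"
  by (simp add: nbh_eq finite_sym)

lemma nbh_carrier: "group G \<Longrightarrow> S \<subseteq> carrier G \<Longrightarrow> A \<subseteq> carrier G \<Longrightarrow> nbh G S A \<subseteq> carrier G"
  using sym_gens_carrier[of G S] by (auto simp: nbh_eq intro!: group.is_monoid monoid.m_closed)

lemma A_nbh: "A \<subseteq> nbh G S A"
  by (auto simp: nbh_def)

lemma nbh_mono: "A \<subseteq> B \<Longrightarrow> nbh G S A \<subseteq> nbh G S B"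
  by (auto simp: nbh_eq)

lemma card_ob: "finite A \<Longrightarrow> finite S \<Longrightarrow>
   real (card (outer_boundary G S A)) = real (card (nbh G S A)) - real (card A)"
proof -
  assume f: "finite A" "finite S"
  have "nbh G S A = A \<union> outer_boundary G S A" by (simp add: nbh_def)
  moreover have "A \<inter> outer_boundary G S A = {}" by (auto simp: outer_boundary_def)
  moreover have "finite (outer_boundary G S A)"
    using nbh_finite[OF f, of G] by (auto simp: nbh_def)
  ultimately have "card (nbh G S A) = card A + card (outer_boundary G S A)"
    using f by (simp add: card_Un_disjoint)
  then show ?thesis by simp
qed

lemma intr_sub: "intr G S E \<subseteq> E" by (auto simp: intr_def)

lemma card_ib: "finite E \<Longrightarrow>
   real (card (inner_boundary G S E)) = real (card E) - real (card (intr G S E))"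
proof -
  assume f: "finite E"
  have "inner_boundary G S E \<subseteq> E" by (auto simp: inner_boundary_def)
  then have "card (intr G S E) = card E - card (inner_boundary G S E)"
    unfolding intr_def using f by (simp add: card_Diff_subset finite_subset)
  moreover have "card (inner_boundary G S E) \<le> card E"
    using \<open>inner_boundary G S E \<subseteq> E\<close> f by (simp add: card_mono)
  ultimately show ?thesis by simp
qed

lemma rin_eq: "finite E \<Longrightarrow> E \<noteq> {} \<Longrightarrow>
   rin G S E = 1 - real (card (intr G S E)) / real (card E)"
  unfolding rin_def using card_ib[of E G S]
  by (simp add: diff_divide_distrib card_gt_0_iff)

lemma nbh_intr: "nbh G S (intr G S E) \<subseteq> E"
  by (auto simp: nbh_eq intr_def inner_boundary_def)

lemma intr_nbh: "A \<subseteq> intr G S (nbh G S A)"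
  by (auto simp: nbh_eq intr_def inner_boundary_def)

lemma outer_opt_D:
  assumes "optimal_outer G S F" "finite S" "A \<subseteq> carrier G" "finite A" "A \<noteq> {}"
    "card A \<le> card F"
  shows "real (card (nbh G S A)) * card F \<ge> real (card (nbh G S F)) * card A"
    and "card A < card F \<Longrightarrow>
      real (card (nbh G S A)) * card F > real (card (nbh G S F)) * card A"
proof -
  have F: "F \<subseteq> carrier G" "finite F" "F \<noteq> {}"
    using assms(1) by (auto simp: optimal_outer_def optimal_for_def)
  have a: "real (card A) > 0" using assms by (simp add: card_gt_0_iff)
  have fF: "real (card F) > 0" using F by (simp add: card_gt_0_iff)
  have H: "real (card (outer_boundary G S A)) / real (card A) \<ge>
      real (card (outer_boundary G S F)) / real (card F) \<and>
      (card A < card F \<longrightarrow> real (card (outer_boundary G S A)) / real (card A) >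
      real (card (outer_boundary G S F)) / real (card F))"
    using assms unfolding optimal_outer_def optimal_for_def by blast
  note ca = card_ob[OF assms(4) assms(2), of G] and cf = card_ob[OF F(2) assms(2), of G]
  show "real (card (nbh G S A)) * card F \<ge> real (card (nbh G S F)) * card A"
    using H a fF unfolding ca cf by (simp add: field_simps)
  show "card A < card F \<Longrightarrow>
      real (card (nbh G S A)) * card F > real (card (nbh G S F)) * card A"
    using H a fF unfolding ca cf by (simp add: field_simps)
qed

lemma outer_opt_I:
  assumes "optimal_outer G S F" "finite S" "Fs \<subseteq> carrier G" "finite Fs" "Fs \<noteq> {}"
    "card Fs = card F" "card (nbh G S Fs) = card (nbh G S F)"
  shows "optimal_outer G S Fs"
proof -
  have F: "F \<subseteq> carrier G" "finite F" "F \<noteq> {}"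
    using assms(1) by (auto simp: optimal_outer_def optimal_for_def)
  have "real (card (outer_boundary G S Fs)) = real (card (outer_boundary G S F))"
    using card_ob[OF assms(4) assms(2), of G] card_ob[OF F(2) assms(2), of G] assms(6,7) by simp
  then show ?thesis using assms(1,3,4,5,6) unfolding optimal_outer_def optimal_for_def
    by simp
qed

lemma coreC:
  assumes G: "group G" "S \<subseteq> carrier G" "finite S"
    and opt: "optimal_outer G S F"
    and A: "A \<subseteq> carrier G" "finite A" "A \<noteq> {}"
    and ineq: "real (card A) * card (nbh G S F) \<ge> real (card F) * card (nbh G S A)"
    and le: "card (nbh G S A) \<le> card (nbh G S F)"
  shows "\<exists>F''. card F'' = card F \<and> optimal_outer G S F'' \<and> nbh G S F'' = nbh G S A
     \<and> card (nbh G S A) = card (nbh G S F)"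
proof -
  have F: "F \<subseteq> carrier G" "finite F" "F \<noteq> {}"
    using opt by (auto simp: optimal_outer_def optimal_for_def)
  have n: "card F > 0" using F by (simp add: card_gt_0_iff)
  show ?thesis
  proof (cases "card A \<le> card F")
    case True
    have d1: "real (card (nbh G S A)) * card F \<ge> real (card (nbh G S F)) * card A"
      using outer_opt_D(1)[OF opt G(3) A True] .
    have eqA: "card A = card F"
    proof (rule ccontr)
      assume "card A \<noteq> card F"
      then have "card A < card F" using True by simp
      then have "real (card (nbh G S A)) * card F > real (card (nbh G S F)) * card A"
        using outer_opt_D(2)[OF opt G(3) A True] by simp
      then show False using ineq by (simp add: algebra_simps)
    qed
    then have "real (card (nbh G S A)) = real (card (nbh G S F))"
      using d1 ineq n by (simp add: algebra_simps)
    then have eqN: "card (nbh G S A) = card (nbh G S F)" by simp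
    show ?thesis
      using outer_opt_I[OF opt G(3) A eqA eqN] eqA eqN by blast
  next
    case False
    obtain A0 where A0: "A0 \<subseteq> A" "card A0 = card F"
      using obtain_subset_with_card_n[of "card F" A] False by auto
    have A0f: "finite A0" using A0 A finite_subset by blast
    have A0ne: "A0 \<noteq> {}" using A0 n by auto
    have A0c: "A0 \<subseteq> carrier G" using A0 A by auto
    have "real (card (nbh G S A0)) * card F \<ge> real (card (nbh G S F)) * card A0"
      using outer_opt_D(1)[OF opt G(3) A0c A0f A0ne] A0 by simp
    then have ge: "card (nbh G S A0) \<ge> card (nbh G S F)" using A0 n by simp
    have sub: "nbh G S A0 \<subseteq> nbh G S A" using nbh_mono[OF A0(1)] .
    have fin: "finite (nbh G S A)" using nbh_finite[OF A(2) G(3)] .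
    have "card (nbh G S A0) \<le> card (nbh G S A)" using card_mono[OF fin sub] .
    then have eqc: "card (nbh G S A0) = card (nbh G S A)" using ge le by simp
    then have eqs: "nbh G S A0 = nbh G S A" using card_subset_eq[OF fin sub] by simp
    have eqN: "card (nbh G S A0) = card (nbh G S F)" using eqc ge le by simp
    show ?thesis
      using outer_opt_I[OF opt G(3) A0c A0f A0ne A0(2) eqN] A0(2) eqs eqN eqc by metis
  qed
qed

lemma coreD:
  assumes G: "group G" "S \<subseteq> carrier G" "finite S"
    and opt: "optimal_outer G S F"
    and mu: "\<And>E'. E' \<subseteq> carrier G \<Longrightarrow> finite E' \<Longrightarrow> E' \<noteq> {} \<Longrightarrow>
               card E' \<le> card (nbh G S F) \<Longrightarrow> rin G S E' \<ge> rin G S E"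
    and E: "E \<subseteq> carrier G" "finite E" "E \<noteq> {}" "card E \<le> card (nbh G S F)"
    and minimal: "\<And>E'. E' \<subseteq> carrier G \<Longrightarrow> finite E' \<Longrightarrow> E' \<noteq> {} \<Longrightarrow>
               card E' < card E \<Longrightarrow> rin G S E' > rin G S E"
  shows "\<exists>F''. card F'' = card F \<and> optimal_outer G S F'' \<and> nbh G S F'' = E
     \<and> card E = card (nbh G S F)"
proof -
  have F: "F \<subseteq> carrier G" "finite F" "F \<noteq> {}"
    using opt by (auto simp: optimal_outer_def optimal_for_def)
  define m where "m = card (nbh G S F)"
  define A where "A = intr G S E"
  have nF: "finite (nbh G S F)" using nbh_finite[OF F(2) G(3)] .
  have nFc: "nbh G S F \<subseteq> carrier G" using nbh_carrier[OF G(1,2) F(1)] .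
  have nFne: "nbh G S F \<noteq> {}" using A_nbh[of F G S] F by auto
  have mpos: "real m > 0" using nF nFne by (simp add: m_def card_gt_0_iff)
  have epos: "real (card E) > 0" using E by (simp add: card_gt_0_iff)
  have "card F \<le> card (intr G S (nbh G S F))"
    using card_mono[OF finite_subset[OF intr_sub nF] intr_nbh] .
  then have r1: "rin G S (nbh G S F) \<le> 1 - real (card F) / real m"
    unfolding rin_eq[OF nF nFne] m_def[symmetric] using mpos
    by (simp add: divide_right_mono)
  have "rin G S E \<le> rin G S (nbh G S F)" using mu[OF nFc nF nFne] by simp
  then have "1 - real (card A) / real (card E) \<le> 1 - real (card F) / real m"
    using r1 rin_eq[OF E(2,3), of G S] A_def by simp
  then have ineq: "real (card A) * m \<ge> real (card F) * card E"
    using mpos epos by (simp add: field_simps)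
  have Afin: "finite A" unfolding A_def using intr_sub E(2) by (rule finite_subset)
  have Ane: "A \<noteq> {}"
  proof
    assume "A = {}"
    then have "real (card F) * card E \<le> 0" using ineq by simp
    moreover have "real (card F) > 0" using F by (simp add: card_gt_0_iff)
    ultimately show False using epos mult_pos_pos[of "real (card F)" "real (card E)"] by linarith
  qed
  have Ac: "A \<subseteq> carrier G" unfolding A_def using intr_sub[of G S E] E(1) by (rule subset_trans)
  define B where "B = nbh G S A"
  have BE: "B \<subseteq> E" unfolding B_def A_def by (rule nbh_intr)
  have Bf: "finite B" using BE E(2) finite_subset by blast
  have Bne: "B \<noteq> {}" using A_nbh[of A G S] Ane B_def by auto
  have Bc: "B \<subseteq> carrier G" using BE E(1) by blast
  have cB: "card B \<le> card E" using card_mono[OF E(2) BE] .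
  have Bpos: "real (card B) > 0" using Bf Bne by (simp add: card_gt_0_iff)
  have "card A \<le> card (intr G S B)"
    unfolding B_def using card_mono[OF finite_subset[OF intr_sub] intr_nbh[of A G S]] Bf B_def by simp
  then have "rin G S B \<le> 1 - real (card A) / real (card B)"
    unfolding rin_eq[OF Bf Bne] using Bpos by (simp add: divide_right_mono)
  also have "\<dots> \<le> 1 - real (card A) / real (card E)"
    using cB Bpos by (simp add: frac_le)
  also have "\<dots> = rin G S E" using rin_eq[OF E(2,3), of G S] A_def by simp
  finally have rB: "rin G S B \<le> rin G S E" .
  have "card B = card E"
  proof (rule ccontr)
    assume "card B \<noteq> card E"
    then have "card B < card E" using cB by simp
    then show False using minimal[OF Bc Bf Bne] rB by simp
  qed
  then have BE': "B = E" using card_subset_eq[OF E(2) BE] by simp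
  have ineq2: "real (card A) * card (nbh G S F) \<ge> real (card F) * card (nbh G S A)"
    using ineq BE' B_def m_def by simp
  have le2: "card (nbh G S A) \<le> card (nbh G S F)" using BE' B_def E(4) by simp
  show ?thesis using coreC[OF G opt Ac Afin Ane ineq2 le2] BE' B_def by simp
qed

theorem mainTheorem4:
  fixes G :: "('a, 'b) monoid_scheme" and S :: "'a set" and F :: "'a set"
  assumes "group G"
    and "S \<subseteq> carrier G" and "finite S" and "generate G S = carrier G"
    and "optimal_outer G S F"
  shows "\<exists>Fs. card Fs = card F \<and> optimal_outer G S Fs \<and>
            optimal_inner G S (Fs \<union> outer_boundary G S Fs) \<and>
            (\<forall>E. card E = card (Fs \<union> outer_boundary G S Fs) \<and> optimal_inner G S E \<longrightarrow>
               (\<exists>F''. card F'' = card F \<and> optimal_outer G S F'' \<and>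
                      E = F'' \<union> outer_boundary G S F''))"
proof -
  note G = assms(1,2,3) and opt = assms(5)
  have F: "F \<subseteq> carrier G" "finite F" "F \<noteq> {}"
    using opt by (auto simp: optimal_outer_def optimal_for_def)
  define m where "m = card (nbh G S F)"
  have nF: "finite (nbh G S F)" using nbh_finite[OF F(2) G(3)] .
  have nFc: "nbh G S F \<subseteq> carrier G" using nbh_carrier[OF G(1,2) F(1)] .
  have nFne: "nbh G S F \<noteq> {}" using A_nbh[of F G S] F by auto
  define adm where "adm E \<longleftrightarrow> E \<subseteq> carrier G \<and> finite E \<and> E \<noteq> {} \<and> card E \<le> m" for E
  define R where "R = rin G S ` {E. adm E}"
  have Rsub: "R \<subseteq> (\<lambda>(k,s). real k / real s) ` ({0..m} \<times> {0..m})"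
  proof
    fix x assume "x \<in> R"
    then obtain E where E: "adm E" "x = rin G S E" using R_def by auto
    have "inner_boundary G S E \<subseteq> E" by (auto simp: inner_boundary_def)
    then have "card (inner_boundary G S E) \<le> card E" using E adm_def card_mono by metis
    then have "(card (inner_boundary G S E), card E) \<in> {0..m} \<times> {0..m}"
      using E adm_def by auto
    then show "x \<in> (\<lambda>(k,s). real k / real s) ` ({0..m} \<times> {0..m})"
      using E rin_def by force
  qed
  have Rfin: "finite R" using finite_subset[OF Rsub] by simp
  have admF: "adm (nbh G S F)" using adm_def nF nFc nFne m_def by simp
  have Rne: "R \<noteq> {}" using admF R_def by auto
  define mu where "mu = Min R"
  have mule: "mu \<le> rin G S E" if "adm E" for E
    using Min_le[OF Rfin] that R_def mu_def by auto
  have "mu \<in> R" using Min_in[OF Rfin Rne] mu_def by simp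
  then obtain E1 where E1: "adm E1" "rin G S E1 = mu" using R_def by auto
  define P where "P E \<longleftrightarrow> adm E \<and> rin G S E = mu" for E
  obtain E0 where E0: "P E0" and E0min: "\<And>E. P E \<Longrightarrow> card E0 \<le> card E"
    using ex_has_least_nat[of P E1 card] E1 P_def by blast
  have strict: "rin G S E' > rin G S E" if "P E" "\<And>E. P E \<Longrightarrow> card E0 \<le> card E"
    "E' \<subseteq> carrier G" "finite E'" "E' \<noteq> {}" "card E' < card E" "card E = card E0" for E E'
  proof -
    have "adm E'" using that P_def adm_def by auto
    then have "rin G S E' \<ge> mu" using mule by simp
    moreover have "rin G S E' \<noteq> mu"
    proof
      assume "rin G S E' = mu"
      then have "P E'" using \<open>adm E'\<close> P_def by simp
      then show False using that(2)[of E'] that(6,7) by simp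
    qed
    ultimately show ?thesis using that(1) P_def by simp
  qed
  have D: "\<exists>F''. card F'' = card F \<and> optimal_outer G S F'' \<and> nbh G S F'' = E
     \<and> card E = m" if "P E" "card E = card E0" for E
  proof -
    have mu': "rin G S E' \<ge> rin G S E" if "E' \<subseteq> carrier G" "finite E'" "E' \<noteq> {}"
               "card E' \<le> card (nbh G S F)" for E'
      using mule[of E'] that \<open>P E\<close> P_def adm_def m_def by simp
    have Ep: "E \<subseteq> carrier G" "finite E" "E \<noteq> {}" "card E \<le> card (nbh G S F)"
      using that(1) P_def adm_def m_def by auto
    have st: "rin G S E' > rin G S E" if "E' \<subseteq> carrier G" "finite E'" "E' \<noteq> {}"
      "card E' < card E" for E'
      using strict[OF \<open>P E\<close> E0min that \<open>card E = card E0\<close>] .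
    show ?thesis
      using coreD[OF G opt mu' Ep st] m_def by simp
  qed
  have E0opt: "optimal_inner G S E0"
    unfolding optimal_inner_def optimal_for_def
  proof (intro conjI allI impI)
    show "E0 \<subseteq> carrier G" "finite E0" "E0 \<noteq> {}" using E0 P_def adm_def by auto
    fix F' assume F': "F' \<subseteq> carrier G \<and> finite F' \<and> F' \<noteq> {} \<and> card F' \<le> card E0"
    then have "adm F'" using E0 P_def adm_def by auto
    then show "real (card (inner_boundary G S E0)) / real (card E0)
         \<le> real (card (inner_boundary G S F')) / real (card F')"
      using mule E0 P_def rin_def by metis
    assume "card F' < card E0"
    then show "real (card (inner_boundary G S E0)) / real (card E0)
         < real (card (inner_boundary G S F')) / real (card F')"
      using strict[OF E0 E0min, of F'] F' unfolding rin_def by simp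
  qed
  obtain Fs where Fs: "card Fs = card F" "optimal_outer G S Fs" "nbh G S Fs = E0" "card E0 = m"
    using D[OF E0] by auto
  show ?thesis
  proof (rule exI[of _ Fs], intro conjI allI impI)
    show "card Fs = card F" "optimal_outer G S Fs" using Fs by auto
    show "optimal_inner G S (Fs \<union> outer_boundary G S Fs)"
      using E0opt Fs(3) nbh_def by metis
    fix E assume H: "card E = card (Fs \<union> outer_boundary G S Fs) \<and> optimal_inner G S E"
    then have cE: "card E = card E0" using Fs(3) nbh_def by metis
    have Eo: "E \<subseteq> carrier G" "finite E" "E \<noteq> {}"
      using H by (auto simp: optimal_inner_def optimal_for_def)
    have admE: "adm E" using Eo cE Fs(4) adm_def by simp
    have E0p: "E0 \<subseteq> carrier G" "finite E0" "E0 \<noteq> {}" using E0 P_def adm_def by auto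
    have HH: "\<forall>F'. F' \<subseteq> carrier G \<and> finite F' \<and> F' \<noteq> {} \<and> card F' \<le> card E \<longrightarrow>
        real (card (inner_boundary G S F')) / real (card F') \<ge>
        real (card (inner_boundary G S E)) / real (card E) \<and>
        (card F' < card E \<longrightarrow>
           real (card (inner_boundary G S F')) / real (card F') >
           real (card (inner_boundary G S E)) / real (card E))"
      using H unfolding optimal_inner_def optimal_for_def by blast
    have "rin G S E \<le> rin G S E0"
      using HH[rule_format, of E0] E0p cE unfolding rin_def by simp
    then have "P E" using mule[OF admE] E0 P_def admE by simp
    then obtain F'' where "card F'' = card F" "optimal_outer G S F''" "nbh G S F'' = E"
      using D cE by blast
    then show "\<exists>F''. card F'' = card F \<and> optimal_outer G S F'' \<and>
                      E = F'' \<union> outer_boundary G S F''" using nbh_def by metis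
  qed
qed

end
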